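(* Let $\varepsilon>0$ and let $G$ be an $n$-vertex graph with $e(G)\geq 2n/\varepsilon$. Then there exists a set $\mathcal{M}$ of edge-disjoint matchings in $G$ such that (M1) $|\mathcal{M}|\leq 2n$; (M2) $\left|E(G)\setminus\bigcup_{M\in\mathcal{M}}M\right|\leq 2\varepsilon e(G)$; and (M3) $|M|\geq\frac{\varepsilon e(G)}{2n}$ for every $M\in\mathcal{M}$.
   Context: A matching is a set of pairwise vertex-disjoint edges; $e(G)$ is the number of edges of $G$. *)

theory Defs
  imports Complex_Main "HOL-Library.Disjoint_Sets"
begin

definition simple_graph :: "'a set \<Rightarrow> 'a set set \<Rightarrow> bool" where
  "simple_graph V E \<longleftrightarrow> finite V \<and> (\<forall>e\<in>E. e \<subseteq> V \<and> card e = 2)"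

definition matching_in :: "'a set set \<Rightarrow> 'a set set \<Rightarrow> bool" where
  "matching_in E M \<longleftrightarrow> M \<subseteq> E \<and> (\<forall>e\<in>M. \<forall>f\<in>M. e \<noteq> f \<longrightarrow> e \<inter> f = {})"

end

theory Submission
  imports Defs
begin

lemma greedy_col:
  assumes "finite V" "finite E" "\<forall>e\<in>E. e \<subseteq> V \<and> card e = 2"
  shows "\<exists>c::'a set \<Rightarrow> nat. (\<forall>e\<in>E. c e < 2 * card V) \<and>
           (\<forall>e\<in>E. \<forall>f\<in>E. e \<noteq> f \<and> e \<inter> f \<noteq> {} \<longrightarrow> c e \<noteq> c f)"
  using assms(2,3)
proof (induction E rule: finite_induct)
  case empty
  then show ?case by auto
next
  case (insert e F)
  then obtain c where c1: "\<forall>e\<in>F. c e < 2 * card V"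
    and c2: "\<forall>e\<in>F. \<forall>f\<in>F. e \<noteq> f \<and> e \<inter> f \<noteq> {} \<longrightarrow> c e \<noteq> c f" by auto
  have eV: "e \<subseteq> V" "card e = 2" using insert by auto
  then obtain u v where uv: "e = {u, v}" "u \<noteq> v" by (auto simp: card_2_iff)
  have uV: "u \<in> V" "v \<in> V" using eV uv by auto
  define N where "N = {f\<in>F. f \<inter> e \<noteq> {}}"
  have sub: "N \<subseteq> (\<lambda>w. {u,w})`(V-{u}) \<union> (\<lambda>w. {v,w})`(V-{v})"
  proof
    fix f assume "f \<in> N"
    then have f: "f \<in> F" "f \<inter> e \<noteq> {}" by (auto simp: N_def)
    then have "f \<subseteq> V" "card f = 2" using insert by auto
    then obtain a b where ab: "f = {a,b}" "a \<noteq> b" by (auto simp: card_2_iff)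
    show "f \<in> (\<lambda>w. {u,w})`(V-{u}) \<union> (\<lambda>w. {v,w})`(V-{v})"
    proof -
      have abV: "a \<in> V" "b \<in> V" using ab \<open>f \<subseteq> V\<close> by auto
      have "a = u \<or> b = u \<or> a = v \<or> b = v" using f(2) ab uv by auto
      then show ?thesis
      proof (elim disjE)
        assume "a = u" then have "f = (\<lambda>w. {u,w}) b" "b \<in> V-{u}" using ab abV by auto
        then show ?thesis by blast
      next
        assume "b = u" then have "f = (\<lambda>w. {u,w}) a" "a \<in> V-{u}" using ab abV by auto
        then show ?thesis by blast
      next
        assume "a = v" then have "f = (\<lambda>w. {v,w}) b" "b \<in> V-{v}" using ab abV by auto
        then show ?thesis by blast
      next
        assume "b = v" then have "f = (\<lambda>w. {v,w}) a" "a \<in> V-{v}" using ab abV by auto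
        then show ?thesis by blast
      qed
    qed
  qed
  have "card N \<le> card ((\<lambda>w. {u,w})`(V-{u}) \<union> (\<lambda>w. {v,w})`(V-{v}))"
    by (rule card_mono) (use assms(1) sub in auto)
  also have "\<dots> \<le> card ((\<lambda>w. {u,w})`(V-{u})) + card ((\<lambda>w. {v,w})`(V-{v}))"
    by (rule card_Un_le)
  also have "\<dots> \<le> card (V-{u}) + card (V-{v})"
    by (intro add_mono card_image_le) (use assms(1) in auto)
  also have "\<dots> = 2 * card V - 2" using uV assms(1) by auto
  finally have cN: "card N \<le> 2 * card V - 2" .
  have "card (c`N) \<le> card N" using insert(1) by (intro card_image_le) (auto simp: N_def)
  moreover have "card V > 0" using uV assms(1) card_gt_0_iff by blast
  ultimately have ccN: "card (c ` N) < 2 * card V"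
    using cN by linarith
  have "\<not> {..<2 * card V} \<subseteq> c ` N"
  proof
    assume "{..<2 * card V} \<subseteq> c ` N"
    then have "card {..<2 * card V} \<le> card (c ` N)"
      using insert(1) by (intro card_mono) (auto simp: N_def)
    with ccN show False by simp
  qed
  then obtain k where k: "k < 2 * card V" "k \<notin> c ` N" by auto
  define c' where "c' = c(e := k)"
  have "\<forall>f\<in>insert e F. c' f < 2 * card V" using c1 k by (auto simp: c'_def)
  moreover have "\<forall>f\<in>insert e F. \<forall>g\<in>insert e F. f \<noteq> g \<and> f \<inter> g \<noteq> {} \<longrightarrow> c' f \<noteq> c' g"
  proof (intro ballI impI)
    fix f g assume fg: "f \<in> insert e F" "g \<in> insert e F" "f \<noteq> g \<and> f \<inter> g \<noteq> {}"
    show "c' f \<noteq> c' g"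
    proof (cases "f = e")
      case True
      then have "g \<in> N" using fg by (auto simp: N_def)
      then show ?thesis using True k fg insert(2) by (auto simp: c'_def N_def)
    next
      case False
      note F = this
      show ?thesis
      proof (cases "g = e")
        case True
        then have "f \<in> N" using fg F by (auto simp: N_def)
        then show ?thesis using True k fg insert(2) by (auto simp: c'_def N_def)
      next
        case False
        then show ?thesis using F fg c2 insert(2) by (auto simp: c'_def)
      qed
    qed
  qed
  ultimately show ?case by blast
qed

theorem corollary21:
  fixes V :: "'a set" and E :: "'a set set" and n :: nat and \<epsilon> :: real
  assumes "simple_graph V E" and "card V = n" and "\<epsilon> > 0"
    and "real (card E) \<ge> 2 * real n / \<epsilon>"
  shows "\<exists>\<M> :: 'a set set set.
           (\<forall>M\<in>\<M>. matching_in E M) \<and> disjoint \<M> \<and>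
           card \<M> \<le> 2 * n \<and>
           real (card (E - \<Union>\<M>)) \<le> 2 * \<epsilon> * real (card E) \<and>
           (\<forall>M\<in>\<M>. real (card M) \<ge> \<epsilon> * real (card E) / (2 * real n))"
proof -
  have fV: "finite V" and EV: "\<forall>e\<in>E. e \<subseteq> V \<and> card e = 2"
    using assms(1) by (auto simp: simple_graph_def)
  have fE: "finite E"
  proof (rule finite_subset)
    show "E \<subseteq> Pow V" using EV by auto
  qed (use fV in auto)
  obtain c where c1: "\<forall>e\<in>E. c e < 2 * n"
    and c2: "\<forall>e\<in>E. \<forall>f\<in>E. e \<noteq> f \<and> e \<inter> f \<noteq> {} \<longrightarrow> c e \<noteq> c f"
    using greedy_col[OF fV fE EV] assms(2) by auto
  define t where "t = \<epsilon> * real (card E) / (2 * real n)"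
  have t0: "t \<ge> 0" using assms(3) by (simp add: t_def)
  define C where "C i = {f\<in>E. c f = i}" for i
  define S where "S = {i\<in>{..<2*n}. real (card (C i)) \<ge> t}"
  define Sb where "Sb = {i\<in>{..<2*n}. \<not> real (card (C i)) \<ge> t}"
  define \<M> where "\<M> = C ` S"
  have "\<forall>M\<in>\<M>. matching_in E M"
    using c2 by (auto simp: \<M>_def C_def matching_in_def)
  moreover have "disjoint \<M>"
    unfolding disjoint_def \<M>_def C_def by auto
  moreover have "card \<M> \<le> 2 * n"
  proof -
    have "card \<M> \<le> card S" unfolding \<M>_def by (rule card_image_le) (simp add: S_def)
    also have "\<dots> \<le> card {..<2*n}" by (rule card_mono) (auto simp: S_def)
    finally show ?thesis by simp
  qed
  moreover have "real (card (E - \<Union>\<M>)) \<le> 2 * \<epsilon> * real (card E)"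
  proof -
    have "E - \<Union>\<M> \<subseteq> (\<Union>i\<in>Sb. C i)"
      using c1 by (auto simp: \<M>_def S_def Sb_def C_def)
    moreover have "finite (\<Union>i\<in>Sb. C i)" by (rule finite_subset[OF _ fE]) (auto simp: C_def)
    ultimately have "card (E - \<Union>\<M>) \<le> card (\<Union>i\<in>Sb. C i)"
      by (simp add: card_mono)
    also have "\<dots> \<le> (\<Sum>i\<in>Sb. card (C i))" by (rule card_UN_le) (simp add: Sb_def)
    finally have "real (card (E - \<Union>\<M>)) \<le> (\<Sum>i\<in>Sb. real (card (C i)))"
      by (metis of_nat_le_iff of_nat_sum)
    also have "\<dots> \<le> (\<Sum>i\<in>Sb. t)" by (rule sum_mono) (auto simp: Sb_def)
    also have "\<dots> = real (card Sb) * t" by simp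
    also have "\<dots> \<le> real (2 * n) * t"
    proof (rule mult_right_mono[OF _ t0])
      have "card Sb \<le> card {..<2*n}" by (rule card_mono) (auto simp: Sb_def)
      then show "real (card Sb) \<le> real (2 * n)" by simp
    qed
    also have "\<dots> \<le> \<epsilon> * real (card E)"
      using assms(3) by (cases "n = 0") (auto simp: t_def)
    also have "\<dots> \<le> 2 * \<epsilon> * real (card E)" using assms(3) by simp
    finally show ?thesis .
  qed
  moreover have "\<forall>M\<in>\<M>. real (card M) \<ge> t" by (auto simp: \<M>_def S_def)
  ultimately show ?thesis unfolding t_def by blast
qed

end
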